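(* Let $T:\mathbb{Z}_{\ge 0}\to\mathbb{R}$ satisfy $T(mn) = T(m)T(n) + T(m-1)T(n-1)$ for all integers $m,n\ge 1$, and suppose $T(0)=0$ and $T(1)=1$. Write $c=T(2)$ and $d=T(3)$. Then for all $n\ge 1$, $$T(2n)=cT(n)+T(n-1)\quad\text{and}\quad T(2n-1)=T(n)+(d-c)T(n-1).$$ In particular, $T(n)$ for every $n\ge 3$ is determined by $c$ and $d$: if $T'$ is another sequence satisfying the same product rule with $T'(0)=0$, $T'(1)=1$, $T'(2)=c$, $T'(3)=d$, then $T'(n)=T(n)$ for all $n\ge 0$. *)

theory Defs
  imports Complex_Main
begin

end

theory Submission
  imports Defs
begin

lemma aux:
  fixes T :: "nat \<Rightarrow> real"
  assumes prod: "\<forall>m n. m \<ge> 1 \<longrightarrow> n \<ge> 1 \<longrightarrow> T (m * n) = T m * T n + T (m - 1) * T (n - 1)"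
    and T1: "T 1 = 1" and n: "n \<ge> 1"
  shows "T (2 * n) = T 2 * T n + T (n - 1) \<and> T (2 * n - 1) = T n + (T 3 - T 2) * T (n - 1)"
proof -
  have a: "T (2 * n) = T 2 * T n + T (n - 1)" using prod[rule_format, of 2 n] n T1 by simp
  have b: "T (4 * n) = T 4 * T n + T 3 * T (n - 1)" using prod[rule_format, of 4 n] n by simp
  have c: "T 4 = T 2 * T 2 + 1" using prod[rule_format, of 2 2] T1 by simp
  have e: "T (2 * (2 * n)) = T 2 * T (2 * n) + T (2 * n - 1)" using prod[rule_format, of 2 "2*n"] n T1 by simp
  have "T (2 * n - 1) = T (4 * n) - T 2 * T (2 * n)" using e by (simp add: mult.assoc[symmetric])
  also have "\<dots> = T n + (T 3 - T 2) * T (n - 1)" using a b c by (simp add: algebra_simps)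
  finally show ?thesis using a by simp
qed

theorem lemma9:
  fixes T :: "nat \<Rightarrow> real" and c d :: real
  assumes prod: "\<And>m n. m \<ge> 1 \<Longrightarrow> n \<ge> 1 \<Longrightarrow> T (m * n) = T m * T n + T (m - 1) * T (n - 1)"
    and T0: "T 0 = 0" and T1: "T 1 = 1"
    and c_def: "c = T 2" and d_def: "d = T 3"
  shows "(\<forall>n\<ge>1. T (2 * n) = c * T n + T (n - 1) \<and> T (2 * n - 1) = T n + (d - c) * T (n - 1))
       \<and> (\<forall>T' :: nat \<Rightarrow> real.
            (\<forall>m n. m \<ge> 1 \<longrightarrow> n \<ge> 1 \<longrightarrow> T' (m * n) = T' m * T' n + T' (m - 1) * T' (n - 1))
            \<and> T' 0 = 0 \<and> T' 1 = 1 \<and> T' 2 = c \<and> T' 3 = d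
            \<longrightarrow> (\<forall>n. T' n = T n))"
proof -
  have P: "\<forall>m n. m \<ge> 1 \<longrightarrow> n \<ge> 1 \<longrightarrow> T (m * n) = T m * T n + T (m - 1) * T (n - 1)"
    using prod by blast
  have A: "\<forall>n\<ge>1. T (2 * n) = c * T n + T (n - 1) \<and> T (2 * n - 1) = T n + (d - c) * T (n - 1)"
    using aux[OF P T1] c_def d_def by blast
  have B: "T' n = T n" if H: "(\<forall>m n. m \<ge> 1 \<longrightarrow> n \<ge> 1 \<longrightarrow> T' (m * n) = T' m * T' n + T' (m - 1) * T' (n - 1))
            \<and> T' 0 = 0 \<and> T' 1 = 1 \<and> T' 2 = c \<and> T' 3 = d" for T' n
  proof -
    have A': "\<forall>n\<ge>1. T' (2 * n) = c * T' n + T' (n - 1) \<and> T' (2 * n - 1) = T' n + (d - c) * T' (n - 1)"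
      using aux[of T'] H by auto
    show ?thesis
    proof (induction n rule: less_induct)
      case (less n)
      show ?case
      proof (cases "n \<le> 3")
        case True
        then have "n = 0 \<or> n = 1 \<or> n = 2 \<or> n = 3" by auto
        then show ?thesis using H T0 T1 c_def d_def by auto
      next
        case False
        show ?thesis
        proof (cases "even n")
          case True
          then obtain k where k: "n = 2 * k" by blast
          with False have "k \<ge> 1" "k < n" "k - 1 < n" by auto
          then show ?thesis using A A' less k by simp
        next
          case odd: False
          define k where "k = n div 2 + 1"
          have k: "n = 2 * k - 1" "k \<ge> 1" using odd unfolding k_def by presburger+
          with False have "k < n" "k - 1 < n" by auto
          then show ?thesis using A A' less k by simp
        qed
      qed
    qed
  qed
  show ?thesis using A B by blast
qed

end
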